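(* Let $p\in\mathbb{R}$. If $z=(v,m,\sigma,e)\in Z$ satisfies $m\ne(e+p)v$ and $\lambda_{\max}(v\otimes v-\sigma)<e$, then $z\in K^{\Lambda,2}$.
   Context: $\mathcal S_0^{2\times2}$ is the space of traceless symmetric $2\times2$ matrices, $Z:=\mathbb{R}^2\times\mathbb{R}^2\times\mathcal S_0^{2\times2}\times\mathbb{R}$, $\lambda_{\max}$ the largest eigenvalue, $K:=\{z\in Z: v\otimes v-\sigma=e\,\mathrm{Id},\ m=(e+p)v\}$. The wave cone is $\Lambda=\{\bar z=(\bar v,\bar m,\bar\sigma,\bar e)\in Z:\ (\bar v,\bar e)\neq0\text{ and there is }0\ne(\xi,c)\in\mathbb{R}^2\times\mathbb{R}\text{ with }(\bar\sigma+\bar e\,\mathrm{Id})\xi+c\bar v=0,\ \bar v\cdot\xi=0,\ \bar m\cdot\xi+c\bar e=0\}$. For $A\subset Z$, $A^{\Lambda,1}:=A\cup\{sz_1+(1-s)z_2: z_1,z_2\in A,\ s\in[0,1],\ z_1-z_2\in\Lambda\}$; $K^{\Lambda,1}:=(K)^{\Lambda,1}$ and $K^{\Lambda,2}:=(K^{\Lambda,1})^{\Lambda,1}$. *)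

theory Defs
  imports "HOL-Analysis.Analysis"
begin

type_synonym zpt = "(real^2) * (real^2) * (real^2^2) * real"

definition Zspace :: "zpt set" where
  "Zspace = {(v, m, \<sigma>, e). transpose \<sigma> = \<sigma> \<and> trace \<sigma> = 0}"

definition outer :: "real^2 \<Rightarrow> real^2 \<Rightarrow> real^2^2" where
  "outer a b = (\<chi> i j. a $ i * b $ j)"

definition Kset :: "real \<Rightarrow> zpt set" where
  "Kset p = {(v, m, \<sigma>, e). (v, m, \<sigma>, e) \<in> Zspace \<and>
                outer v v - \<sigma> = e *\<^sub>R mat 1 \<and> m = (e + p) *\<^sub>R v}"

definition wave_cone :: "zpt set" where
  "wave_cone = {(v, m, \<sigma>, e). (v, m, \<sigma>, e) \<in> Zspace \<and> (v, e) \<noteq> 0 \<and>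
      (\<exists>\<xi> :: real^2. \<exists>c :: real. (\<xi>, c) \<noteq> 0 \<and>
         (\<sigma> + e *\<^sub>R mat 1) *v \<xi> + c *\<^sub>R v = 0 \<and> v \<bullet> \<xi> = 0 \<and> m \<bullet> \<xi> + c * e = 0)}"

definition lam1 :: "zpt set \<Rightarrow> zpt set" where
  "lam1 A = A \<union> {s *\<^sub>R z1 + (1 - s) *\<^sub>R z2 | s z1 z2.
                 z1 \<in> A \<and> z2 \<in> A \<and> 0 \<le> s \<and> s \<le> 1 \<and> z1 - z2 \<in> wave_cone}"

definition lambda_max :: "real^2^2 \<Rightarrow> real" where
  "lambda_max M = Max {l. \<exists>x :: real^2. x \<noteq> 0 \<and> M *v x = l *\<^sub>R x}"

end

theory Submission
  imports Defs
begin

definition Phi :: "real \<Rightarrow> real^2 \<Rightarrow> real^2^2 \<Rightarrow> real^2 \<Rightarrow> zpt" where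
  "Phi p v P r = (let e = (trace P + v \<bullet> v)/2 in
     (v, r + (e + p) *\<^sub>R v, P + outer v v - e *\<^sub>R mat 1, e))"

lemmas cs = vec_eq_iff forall_2 sum_2 inner_vec_def trace_def outer_def mat_def
   matrix_vector_mult_def transpose_def

lemma G:
  "s *\<^sub>R Phi p (v + (1-s) *\<^sub>R d) P r + (1-s) *\<^sub>R Phi p (v - s *\<^sub>R d) P r
   = Phi p v (P + (s * (1-s)) *\<^sub>R outer d d) (r + (s * (1-s)*(v \<bullet> d + (1-2 * s)*(d \<bullet> d)/2)) *\<^sub>R d)"
  unfolding Phi_def Let_def
  by (simp add: cs field_simps)

lemma KPhi: "Phi p a 0 0 \<in> Kset p"
  unfolding Phi_def Let_def Kset_def Zspace_def
  by (simp add: cs algebra_simps)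

lemma wave: assumes "v1 \<noteq> v2" "transpose P = P"
  shows "Phi p v1 P r - Phi p v2 P r \<in> wave_cone"
proof -
  define V where "V = v1 - v2"
  define \<xi> :: "real^2" where "\<xi> = (\<chi> i. if i = 1 then - V$2 else V$1)"
  have V0: "V \<noteq> 0" using assms V_def by auto
  have x0: "\<xi> \<noteq> 0" using V0 unfolding \<xi>_def by (auto simp: cs)
  show ?thesis
    unfolding wave_cone_def Zspace_def Phi_def Let_def
    apply (simp)
    apply (intro conjI)
    subgoal using assms(2) by (simp add: cs)
    subgoal by (simp add: cs)
    subgoal using assms(1) by (auto simp: zero_prod_def)
    apply (rule exI[of _ \<xi>], rule exI[of _ "- (v1 \<bullet> \<xi>)"])
    apply (intro conjI)
    subgoal using x0 by (simp add: zero_prod_def)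
    unfolding \<xi>_def V_def
    apply (simp_all add: cs field_simps)
    done
qed

lemma lam1I: "z1 \<in> A \<Longrightarrow> z2 \<in> A \<Longrightarrow> 0 \<le> s \<Longrightarrow> s \<le> 1 \<Longrightarrow> z1 - z2 \<in> wave_cone
   \<Longrightarrow> s *\<^sub>R z1 + (1 - s) *\<^sub>R z2 \<in> lam1 A"
  unfolding lam1_def by blast

lemma lam1_sub: "A \<subseteq> lam1 A" unfolding lam1_def by blast

lemma R:
  fixes u v :: "real^2" and \<kappa> :: real
  assumes "u \<noteq> 0"
  shows "\<exists>s d. 0 < s \<and> s < 1 \<and> d \<noteq> 0 \<and> (s * (1-s)) *\<^sub>R outer d d = outer u u \<and>
     (s * (1-s) * (v \<bullet> d + (1 - 2 * s) * (d \<bullet> d) / 2)) *\<^sub>R d = \<kappa> *\<^sub>R u"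
proof -
  have uu: "u \<bullet> u > 0" using assms by simp
  define \<beta> where "\<beta> = (\<kappa> - v \<bullet> u) / (u \<bullet> u)"
  define S where "S = sqrt (1 + \<beta>^2)"
  have S0: "S > 0" unfolding S_def by (simp add: add_pos_nonneg)
  have S2: "S^2 = 1 + \<beta>^2" unfolding S_def by (simp add: add_nonneg_nonneg)
  have bS: "\<bar>\<beta>\<bar> < S" unfolding S_def
    by (metis abs_ge_zero add.commute less_add_one real_sqrt_abs real_sqrt_less_mono)
  define s where "s = (1 - \<beta> / S) / 2"
  define d where "d = (2 * S) *\<^sub>R u"
  have s0: "0 < s" "s < 1" using bS S0 unfolding s_def
    by (auto simp: abs_less_iff field_simps)
  have ss: "s * (1 - s) = 1 / (4 * S^2)"
    unfolding s_def using S0 S2 by (simp add: field_simps power2_eq_square)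
  have s12: "1 - 2 * s = \<beta> / S" unfolding s_def by (simp add: field_simps)
  have d0: "d \<noteq> 0" using S0 assms unfolding d_def by simp
  have e1: "(s * (1-s)) *\<^sub>R outer d d = outer u u"
    unfolding ss d_def using S0 by (simp add: cs field_simps power2_eq_square)
  define X where "X = s * (1-s) * (v \<bullet> d + (1 - 2 * s) * (d \<bullet> d) / 2)"
  have "X * (2 * S) = \<kappa>"
    unfolding X_def ss s12 d_def \<beta>_def using S0 uu
    by (simp add: field_simps power2_eq_square inner_commute)
  moreover have "X *\<^sub>R d = (X * (2 * S)) *\<^sub>R u" unfolding d_def by simp
  ultimately have e2: "X *\<^sub>R d = \<kappa> *\<^sub>R u" by simp
  show ?thesis using s0 d0 e1 e2 unfolding X_def by blast
qed

lemma outer_T: "transpose (outer w w) = outer w w"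
  by (simp add: cs)

lemma t0: "transpose (0::real^2^2) = 0" by (simp add: cs)

lemma inner_step:
  assumes "w \<noteq> 0"
  shows "Phi p v (outer w w) (\<mu> *\<^sub>R w) \<in> lam1 (Kset p)"
proof -
  obtain s d where sd: "0 < s" "s < 1" "d \<noteq> 0" "(s * (1-s)) *\<^sub>R outer d d = outer w w"
     "(s * (1-s) * (v \<bullet> d + (1 - 2 * s) * (d \<bullet> d) / 2)) *\<^sub>R d = \<mu> *\<^sub>R w"
    using R[OF assms, of v \<mu>] by blast
  have ne: "v + (1-s) *\<^sub>R d \<noteq> v - s *\<^sub>R d"
  proof
    assume "v + (1-s) *\<^sub>R d = v - s *\<^sub>R d"
    then have "(1-s) *\<^sub>R d + s *\<^sub>R d = 0" by (simp add: algebra_simps)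
    then have "d = 0" by (simp add: scaleR_left_distrib[symmetric])
    then show False using sd by simp
  qed
  have "s *\<^sub>R Phi p (v + (1-s) *\<^sub>R d) 0 0 + (1-s) *\<^sub>R Phi p (v - s *\<^sub>R d) 0 0
     \<in> lam1 (Kset p)"
    by (rule lam1I[OF KPhi KPhi]) (use sd wave[OF ne t0, of p 0] in auto)
  then show ?thesis unfolding G using sd by simp
qed

lemma outer_step:
  assumes "w \<noteq> 0" "u \<noteq> 0"
  shows "Phi p v (outer w w + outer u u) (\<mu> *\<^sub>R w + \<kappa> *\<^sub>R u) \<in> lam1 (lam1 (Kset p))"
proof -
  obtain s d where sd: "0 < s" "s < 1" "d \<noteq> 0" "(s * (1-s)) *\<^sub>R outer d d = outer u u"
     "(s * (1-s) * (v \<bullet> d + (1 - 2 * s) * (d \<bullet> d) / 2)) *\<^sub>R d = \<kappa> *\<^sub>R u"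
    using R[OF assms(2), of v \<kappa>] by blast
  have ne: "v + (1-s) *\<^sub>R d \<noteq> v - s *\<^sub>R d"
  proof
    assume "v + (1-s) *\<^sub>R d = v - s *\<^sub>R d"
    then have "(1-s) *\<^sub>R d + s *\<^sub>R d = 0" by (simp add: algebra_simps)
    then have "d = 0" by (simp add: scaleR_left_distrib[symmetric])
    then show False using sd by simp
  qed
  have "s *\<^sub>R Phi p (v + (1-s) *\<^sub>R d) (outer w w) (\<mu> *\<^sub>R w)
     + (1-s) *\<^sub>R Phi p (v - s *\<^sub>R d) (outer w w) (\<mu> *\<^sub>R w)
     \<in> lam1 (lam1 (Kset p))"
    by (rule lam1I[OF inner_step[OF assms(1)] inner_step[OF assms(1)]])
       (use sd wave[OF ne outer_T, of p] in auto)
  then show ?thesis unfolding G using sd by simp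
qed

lemma idq: "(l - (a+d)/2)^2 = (a-l)*(d-l) + ((a-d)/2)^2" for a d l :: real
  by (simp add: power2_eq_square field_simps)

lemma char_lemma:
  fixes U :: "real^2^2" and x :: "real^2"
  assumes x: "x \<noteq> 0" "U *v x = l *\<^sub>R x"
   and Ucomp: "\<And>x::real^2. (U *v x)$1 = a * x$1 + b * x$2" "\<And>x::real^2. (U *v x)$2 = b * x$1 + d * x$2"
  shows "(a-l)*(d-l) = b^2"
proof -
    have "(U *v x)$1 = l * x$1" "(U *v x)$2 = l * x$2" using x(2) by simp_all
    then have "a * x$1 + b * x$2 = l * x$1" "b * x$1 + d * x$2 = l * x$2" using Ucomp by simp_all
    then have e1: "(a-l) * x$1 + b * x$2 = 0" and e2: "b * x$1 + (d-l) * x$2 = 0"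
      by (simp_all add: left_diff_distrib right_diff_distrib)
    have "((a-l)*(d-l) - b^2) * x$1 = (d-l)*((a-l) * x$1 + b * x$2) - b*(b * x$1 + (d-l) * x$2)"
      by (simp add: algebra_simps power2_eq_square)
    then have f1: "((a-l)*(d-l) - b^2) * x$1 = 0" using e1 e2 by simp
    have "((a-l)*(d-l) - b^2) * x$2 = (a-l)*(b * x$1 + (d-l) * x$2) - b*((a-l) * x$1 + b * x$2)"
      by (simp add: algebra_simps power2_eq_square)
    then have f2: "((a-l)*(d-l) - b^2) * x$2 = 0" using e1 e2 by simp
    have "x$1 \<noteq> 0 \<or> x$2 \<noteq> 0" using x(1) by (auto simp: vec_eq_iff forall_2)
    then show ?thesis using f1 f2 by auto
qed

lemma eig:
  fixes U :: "real^2^2"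
  assumes sym: "U$1$2 = U$2$1" and lm: "lambda_max U < e"
  shows "e - U$1$1 > 0 \<and> (e - U$1$1) * (e - U$2$2) - (U$1$2)^2 > 0"
proof -
  define a where "a = U$1$1"
  define b where "b = U$1$2"
  define d where "d = U$2$2"
  define D where "D = sqrt (((a-d)/2)^2 + b^2)"
  have D0: "D \<ge> 0" unfolding D_def by simp
  have D2: "D^2 = ((a-d)/2)^2 + b^2" unfolding D_def by simp
  define L where "L = (a+d)/2 + D"
  define L' where "L' = (a+d)/2 - D"
  define Sg where "Sg = {l. \<exists>x::real^2. x \<noteq> 0 \<and> U *v x = l *\<^sub>R x}"
  have Ucomp: "\<And>x::real^2. (U *v x)$1 = a * x$1 + b * x$2" "\<And>x::real^2. (U *v x)$2 = b * x$1 + d * x$2"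
    unfolding a_def b_def d_def matrix_vector_mult_def sum_2 vec_lambda_beta sym by simp_all
  have char: "(a-l)*(d-l) = b^2" if "l \<in> Sg" for l
  proof -
    have "\<exists>x::real^2. x \<noteq> 0 \<and> U *v x = l *\<^sub>R x" using that unfolding Sg_def mem_Collect_eq .
    then obtain x :: "real^2" where x: "x \<noteq> 0" "U *v x = l *\<^sub>R x" by (elim exE conjE)
    show ?thesis by (rule char_lemma[OF x Ucomp])
  qed
  have sub: "Sg \<subseteq> {L, L'}"
  proof
    fix l assume "l \<in> Sg"
    then have "(l - (a+d)/2)^2 = D^2" using char[of l] D2 idq[of l a d] by simp
    then have "l - (a+d)/2 = D \<or> l - (a+d)/2 = - D" by (simp add: power2_eq_iff)
    then show "l \<in> {L, L'}" unfolding L_def L'_def by auto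
  qed
  have fin: "finite Sg" using finite_subset[OF sub] by simp
  have cL: "(a-L)*(d-L) = b^2" using idq[of L a d] D2 unfolding L_def by simp
  have LS: "L \<in> Sg"
  proof (cases "b = 0")
    case False
    define x :: "real^2" where "x = (\<chi> i. if i = 1 then b else L - a)"
    have x1: "x$1 = b" and x2: "x$2 = L - a" unfolding x_def by simp_all
    have c1: "a*b + b*(L-a) = L*b" by (simp add: algebra_simps)
    have c2: "b*b + d*(L-a) = L*(L-a)" using cL by (simp add: algebra_simps power2_eq_square)
    have "x \<noteq> 0" using False x1 by (auto simp: cs)
    moreover have "U *v x = L *\<^sub>R x"
      unfolding vec_eq_iff forall_2 using c1 c2 by (simp add: Ucomp x1 x2)
    ultimately have hx: "x \<noteq> 0 \<and> U *v x = L *\<^sub>R x" by (rule conjI)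
    show ?thesis unfolding Sg_def mem_Collect_eq by (rule exI[of _ x]) (rule hx)
  next
    case True
    then have "L = a \<or> L = d" using cL by auto
    then show ?thesis
    proof
      assume La: "L = a"
      define x :: "real^2" where "x = (\<chi> i. if i = 1 then 1 else 0)"
      have x1: "x$1 = 1" and x2: "x$2 = 0" unfolding x_def by simp_all
      have "x \<noteq> 0" using x1 by (auto simp: cs)
      moreover have "U *v x = L *\<^sub>R x"
        unfolding vec_eq_iff forall_2 using Ucomp x1 x2 La True by simp
      ultimately have hx: "x \<noteq> 0 \<and> U *v x = L *\<^sub>R x" by (rule conjI)
    show ?thesis unfolding Sg_def mem_Collect_eq by (rule exI[of _ x]) (rule hx)
    next
      assume Ld: "L = d"
      define x :: "real^2" where "x = (\<chi> i. if i = 1 then 0 else 1)"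
      have x1: "x$1 = 0" and x2: "x$2 = 1" unfolding x_def by simp_all
      have "x \<noteq> 0" using x2 by (auto simp: cs)
      moreover have "U *v x = L *\<^sub>R x"
        unfolding vec_eq_iff forall_2 using Ucomp x1 x2 Ld True by simp
      ultimately have hx: "x \<noteq> 0 \<and> U *v x = L *\<^sub>R x" by (rule conjI)
    show ?thesis unfolding Sg_def mem_Collect_eq by (rule exI[of _ x]) (rule hx)
    qed
  qed
  have "L \<le> lambda_max U" unfolding lambda_max_def Sg_def[symmetric] using fin LS by simp
  then have Le: "L < e" using lm by simp
  have "\<bar>(a-d)/2\<bar> \<le> D" unfolding D_def
    by (rule real_sqrt_ge_abs1)
  then have aL: "a \<le> L" unfolding L_def by (simp add: abs_le_iff field_simps)
  have "L' \<le> L" unfolding L_def L'_def using D0 by simp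
  have "(e-a)*(e-d) - b^2 = (e-L)*(e-L')" unfolding L_def L'_def using D2
    by (simp add: power2_eq_square field_simps)
  also have "\<dots> > 0" using Le \<open>L' \<le> L\<close> by simp
  finally show ?thesis using aL Le unfolding a_def b_def d_def by simp
qed


theorem lemma2p7:
  fixes p :: real and v m :: "real^2" and \<sigma> :: "real^2^2" and e :: real
  assumes "(v, m, \<sigma>, e) \<in> Zspace"
    and "m \<noteq> (e + p) *\<^sub>R v"
    and "lambda_max (outer v v - \<sigma>) < e"
  shows "(v, m, \<sigma>, e) \<in> lam1 (lam1 (Kset p))"
proof -
  from assms(1) have sT: "transpose \<sigma> = \<sigma>" and tr: "trace \<sigma> = 0" by (auto simp: Zspace_def)
  have "(transpose \<sigma>)$1$2 = \<sigma>$1$2" using sT by simp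
  then have s12: "\<sigma>$2$1 = \<sigma>$1$2" by (simp add: transpose_def)
  have tr2: "\<sigma>$2$2 = - \<sigma>$1$1" using tr by (simp add: trace_def sum_2)
  define U where "U = outer v v - \<sigma>"
  have Us: "U$1$2 = U$2$1" unfolding U_def using s12 by (simp add: outer_def mult.commute)
  have pos: "e - U$1$1 > 0 \<and> (e - U$1$1) * (e - U$2$2) - (U$1$2)^2 > 0"
    using eig[OF Us] assms(3) unfolding U_def by blast
  define A where "A = e - U$1$1"
  define B where "B = - U$1$2"
  define C where "C = e - U$2$2"
  have A0: "A > 0" and dt: "A * C - B^2 > 0" using pos unfolding A_def B_def C_def by auto
  define P where "P = e *\<^sub>R mat 1 - U"
  define r where "r = m - (e+p) *\<^sub>R v"
  have zeq: "(v, m, \<sigma>, e) = Phi p v P r"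
    unfolding Phi_def Let_def P_def U_def r_def
    by (simp add: cs tr2 field_simps)
  define sA where "sA = sqrt A"
  define q where "q = sqrt ((A * C - B^2) / A)"
  have sA0: "sA > 0" and sA2: "sA * sA = A" unfolding sA_def using A0 by simp_all
  have q0: "q > 0" and q2: "q * q = (A * C - B^2) / A" unfolding q_def using A0 dt by simp_all
  define u :: "real^2" where "u = (\<chi> i. if i = 1 then sA else B / sA)"
  define w :: "real^2" where "w = (\<chi> i. if i = 1 then 0 else q)"
  have u1: "u$1 = sA" and u2: "u$2 = B / sA" unfolding u_def by simp_all
  have w1: "w$1 = 0" and w2: "w$2 = q" unfolding w_def by simp_all
  define \<kappa> where "\<kappa> = r$1 / sA"
  define \<mu> where "\<mu> = (r$2 - \<kappa> * B / sA) / q"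
  have P11: "P$1$1 = A" and P12: "P$1$2 = B" and P21: "P$2$1 = B" and P22: "P$2$2 = C"
    unfolding P_def A_def B_def C_def using Us by (simp_all add: mat_def)
  have c11: "P$1$1 = w$1 * w$1 + u$1 * u$1" using P11 u1 w1 sA2 by simp
  have c12: "P$1$2 = w$1 * w$2 + u$1 * u$2" using P12 u1 u2 w1 sA0 by simp
  have c21: "P$2$1 = w$2 * w$1 + u$2 * u$1" using P21 u1 u2 w1 sA0 by simp
  have "C = (A * C - B^2) / A + B^2 / A" using A0 by (simp add: field_simps)
  also have "\<dots> = q * q + (B / sA) * (B / sA)" using q2 sA2 by (simp add: power2_eq_square)
  finally have c22: "P$2$2 = w$2 * w$2 + u$2 * u$2" using P22 u2 w2 by simp
  have Pdec: "P = outer w w + outer u u"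
    unfolding vec_eq_iff forall_2 outer_def using c11 c12 c21 c22 by simp
  have r1: "r$1 = \<mu> * w$1 + \<kappa> * u$1" using u1 w1 sA0 unfolding \<kappa>_def by simp
  have r2: "r$2 = \<mu> * w$2 + \<kappa> * u$2" using u2 w2 q0 unfolding \<mu>_def by simp
  have rdec: "r = \<mu> *\<^sub>R w + \<kappa> *\<^sub>R u"
    unfolding vec_eq_iff forall_2 using r1 r2 by simp
  have w0: "w \<noteq> 0" proof assume "w = 0" then show False using w2 q0 by simp qed
  have u0: "u \<noteq> 0" proof assume "u = 0" then show False using u1 sA0 by simp qed
  show ?thesis using outer_step[OF w0 u0, of p v \<mu> \<kappa>] zeq Pdec rdec by simp
qed

end
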